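(* Let $G=\langle c,s\rangle$, $K$, $z$, $b^{(i)}$ and $\phi:H\to G$ be as in the context. Let $w=s^{\alpha_0}c^{\beta_1}s^{\alpha_1}c^{\beta_2}\cdots s^{\alpha_{n-1}}c^{\beta_n}s^{\alpha_n}$, where $n\ge1$, $\alpha_0,\ldots,\alpha_n,\beta_1,\ldots,\beta_n$ are integers, all nonzero except possibly $\alpha_0$ and $\alpha_n$. Put $\gamma=\sum_{i=0}^{n}\alpha_i$, $\gamma_j=\sum_{i=0}^{j-1}\alpha_i$ for $j=1,\ldots,n$, $B_i=\{j:\gamma_j=\gamma_i\}$, $\gamma_0=\max\{|\gamma_1|,\ldots,|\gamma_n|\}$, and $F=(c^{s^{\gamma_1}})^{\beta_1}\cdots(c^{s^{\gamma_n}})^{\beta_n}\in K^{\langle s\rangle}$, regarded as a function $\langle s\rangle\to K$. Then $w\in\phi(H)$ if and only if $\gamma=0$, $\sum_{j\in B_i}\beta_j=0$ for $i=1,\ldots,n$, $F(s^{\mu})=1$ for all integers $\mu\ne1$ with $|\mu|\le3\gamma_0$, and $F(s)\in\langle [z,b^{(i)}]\ :\ i\in\mathbb{N}\rangle$.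
   Context: Notation: $x^y=yxy^{-1}$, $[x,y]=xyx^{-1}y^{-1}$. For groups $A,B$, the wreath product $A\,\mathrm{Wr}\,B$ is the semidirect product $A^B\rtimes B$, where $A^B$ is the group of all functions $B\to A$ with pointwise multiplication and $B$ acts by $(bf)(x)=f(xb)$, written $f^b=bfb^{-1}$. $H$ is a group generated by a countable set $\{a^{(1)},a^{(2)},\ldots\}$. Let $Z=\langle z\rangle$ be infinite cyclic and $b^{(i)}\in H^Z$ with $b^{(i)}(z^k)=a^{(i)}$ if $k>0$ and $1$ otherwise; $K=\langle z,b^{(i)}\ (i\in\mathbb{N})\rangle\le H\,\mathrm{Wr}\,Z$. Let $\langle s\rangle$ be infinite cyclic and $c\in K^{\langle s\rangle}$ with $c(s)=z$, $c(s^{2^i})=b^{(i)}$ for $i>0$, $c(s^k)=1$ otherwise; $G=\langle c,s\rangle\le K\,\mathrm{Wr}\,\langle s\rangle$. The map $\phi:H\to G$, $a^{(i)}\mapsto[c,c^{s^{2^i-1}}]$, is an injective homomorphism. *)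

theory Defs
  imports "HOL-Algebra.Algebra"
begin

text \<open>Conventions: conjugation x^y = y x y^{-1}, commutator [x,y] = x y x^{-1} y^{-1}.\<close>

definition conjW :: "('a,'b) monoid_scheme \<Rightarrow> 'a \<Rightarrow> 'a \<Rightarrow> 'a" where
  "conjW G x y = y \<otimes>\<^bsub>G\<^esub> x \<otimes>\<^bsub>G\<^esub> inv\<^bsub>G\<^esub> y"

definition commW :: "('a,'b) monoid_scheme \<Rightarrow> 'a \<Rightarrow> 'a \<Rightarrow> 'a" where
  "commW G x y = x \<otimes>\<^bsub>G\<^esub> y \<otimes>\<^bsub>G\<^esub> inv\<^bsub>G\<^esub> x \<otimes>\<^bsub>G\<^esub> inv\<^bsub>G\<^esub> y"

text \<open>Wreath product A Wr Z with Z infinite cyclic, Z identified with int (z^k ~ k).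
  A pair (f,k) stands for the product f z^k, where f is a function Z -> A (all functions,
  unrestricted direct product). Z acts by (z^k f)(z^m) = f(z^(m+k)), f^(z^k) = z^k f z^-k, so
  (f1 z^k1)(f2 z^k2) = (f1 . f2^(z^k1)) z^(k1+k2).\<close>

definition wr_Z :: "('a,'b) monoid_scheme \<Rightarrow> ((int \<Rightarrow> 'a) \<times> int) monoid" where
  "wr_Z A = \<lparr>carrier = {(f,k). \<forall>m. f m \<in> carrier A},
     monoid.mult = (\<lambda>(f1,k1) (f2,k2). (\<lambda>m. f1 m \<otimes>\<^bsub>A\<^esub> f2 (m + k1), k1 + k2)),
     one = (\<lambda>_. \<one>\<^bsub>A\<^esub>, 0)\<rparr>"

definition zW :: "('a,'b) monoid_scheme \<Rightarrow> (int \<Rightarrow> 'a) \<times> int" where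
  "zW A = (\<lambda>_. \<one>\<^bsub>A\<^esub>, 1)"

definition bW :: "('a,'b) monoid_scheme \<Rightarrow> (nat \<Rightarrow> 'a) \<Rightarrow> nat \<Rightarrow> (int \<Rightarrow> 'a) \<times> int" where
  "bW A a i = (\<lambda>k. if k > 0 then a i else \<one>\<^bsub>A\<^esub>, 0)"

definition KK :: "('a,'b) monoid_scheme \<Rightarrow> (nat \<Rightarrow> 'a) \<Rightarrow> ((int \<Rightarrow> 'a) \<times> int) monoid" where
  "KK A a = (wr_Z A)\<lparr>carrier := generate (wr_Z A) (insert (zW A) {bW A a i | i. i \<ge> 1})\<rparr>"

definition cW :: "('a,'b) monoid_scheme \<Rightarrow> (nat \<Rightarrow> 'a) \<Rightarrow> (int \<Rightarrow> (int \<Rightarrow> 'a) \<times> int) \<times> int" where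
  "cW A a = (\<lambda>k. if k = 1 then zW A
                 else if (\<exists>i::nat. i \<ge> 1 \<and> k = 2 ^ i) then bW A a (THE i. i \<ge> 1 \<and> k = 2 ^ i)
                 else \<one>\<^bsub>KK A a\<^esub>, 0)"

definition sW :: "('a,'b) monoid_scheme \<Rightarrow> (nat \<Rightarrow> 'a) \<Rightarrow> (int \<Rightarrow> (int \<Rightarrow> 'a) \<times> int) \<times> int" where
  "sW A a = (\<lambda>_. \<one>\<^bsub>KK A a\<^esub>, 1)"

definition GG :: "('a,'b) monoid_scheme \<Rightarrow> (nat \<Rightarrow> 'a)
    \<Rightarrow> ((int \<Rightarrow> (int \<Rightarrow> 'a) \<times> int) \<times> int) monoid" where
  "GG A a = (wr_Z (KK A a))\<lparr>carrier := generate (wr_Z (KK A a)) {cW A a, sW A a}\<rparr>"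

definition wordW :: "('a,'b) monoid_scheme \<Rightarrow> (nat \<Rightarrow> 'a) \<Rightarrow> nat \<Rightarrow> (nat \<Rightarrow> int) \<Rightarrow> (nat \<Rightarrow> int)
    \<Rightarrow> (int \<Rightarrow> (int \<Rightarrow> 'a) \<times> int) \<times> int" where
  "wordW A a n alpha beta =
     sW A a [^]\<^bsub>GG A a\<^esub> alpha 0 \<otimes>\<^bsub>GG A a\<^esub>
     foldr (\<lambda>j acc. cW A a [^]\<^bsub>GG A a\<^esub> beta j \<otimes>\<^bsub>GG A a\<^esub>
                     (sW A a [^]\<^bsub>GG A a\<^esub> alpha j \<otimes>\<^bsub>GG A a\<^esub> acc))
           [1..<n+1] \<one>\<^bsub>GG A a\<^esub>"

definition gammaW :: "(nat \<Rightarrow> int) \<Rightarrow> nat \<Rightarrow> int" where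
  "gammaW alpha j = (\<Sum>i<j. alpha i)"

definition FW :: "('a,'b) monoid_scheme \<Rightarrow> (nat \<Rightarrow> 'a) \<Rightarrow> nat \<Rightarrow> (nat \<Rightarrow> int) \<Rightarrow> (nat \<Rightarrow> int)
    \<Rightarrow> (int \<Rightarrow> (int \<Rightarrow> 'a) \<times> int) \<times> int" where
  "FW A a n alpha beta =
     foldr (\<lambda>j acc. (conjW (GG A a) (cW A a) (sW A a [^]\<^bsub>GG A a\<^esub> gammaW alpha j))
                        [^]\<^bsub>GG A a\<^esub> beta j \<otimes>\<^bsub>GG A a\<^esub> acc)
           [1..<n+1] \<one>\<^bsub>GG A a\<^esub>"

end

theory Submission
  imports Defs
begin



lemma wr_Z_simps:
  "carrier (wr_Z A) = {(f,k). \<forall>m. f m \<in> carrier A}"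
  "(f1,k1) \<otimes>\<^bsub>wr_Z A\<^esub> (f2,k2) = (\<lambda>m. f1 m \<otimes>\<^bsub>A\<^esub> f2 (m+k1), k1+k2)"
  "\<one>\<^bsub>wr_Z A\<^esub> = (\<lambda>_. \<one>\<^bsub>A\<^esub>, 0)"
  by (simp_all add: wr_Z_def)

lemma wr_Z_mult_snd: "snd (x \<otimes>\<^bsub>wr_Z A\<^esub> y) = snd x + snd y"
  by (cases x, cases y) (simp add: wr_Z_simps)

lemma wr_Z_group: assumes "group A" shows "group (wr_Z A)"
proof -
  interpret A: group A by fact
  show ?thesis
  proof (rule groupI)
    fix x y assume "x \<in> carrier (wr_Z A)" "y \<in> carrier (wr_Z A)"
    then show "x \<otimes>\<^bsub>wr_Z A\<^esub> y \<in> carrier (wr_Z A)"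
      by (cases x, cases y) (auto simp: wr_Z_simps)
  next
    show "\<one>\<^bsub>wr_Z A\<^esub> \<in> carrier (wr_Z A)" by (simp add: wr_Z_simps)
  next
    fix x y z assume "x \<in> carrier (wr_Z A)" "y \<in> carrier (wr_Z A)" "z \<in> carrier (wr_Z A)"
    then show "x \<otimes>\<^bsub>wr_Z A\<^esub> y \<otimes>\<^bsub>wr_Z A\<^esub> z = x \<otimes>\<^bsub>wr_Z A\<^esub> (y \<otimes>\<^bsub>wr_Z A\<^esub> z)"
      by (cases x, cases y, cases z) (auto simp: wr_Z_simps A.m_assoc add.assoc)
  next
    fix x assume "x \<in> carrier (wr_Z A)"
    then show "\<one>\<^bsub>wr_Z A\<^esub> \<otimes>\<^bsub>wr_Z A\<^esub> x = x"
      by (cases x) (auto simp: wr_Z_simps)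
  next
    fix x assume x: "x \<in> carrier (wr_Z A)"
    obtain f k where xe: "x = (f,k)" by (cases x)
    have f: "\<And>m. f m \<in> carrier A" using x xe by (simp add: wr_Z_simps)
    show "\<exists>y\<in>carrier (wr_Z A). y \<otimes>\<^bsub>wr_Z A\<^esub> x = \<one>\<^bsub>wr_Z A\<^esub>"
      by (rule bexI[of _ "(\<lambda>m. inv\<^bsub>A\<^esub> f (m - k), - k)"]) (auto simp: xe wr_Z_simps f)
  qed
qed




lemma wr_Z_inv: assumes "group A" "\<And>m. f m \<in> carrier A"
  shows "inv\<^bsub>wr_Z A\<^esub> (f,k) = (\<lambda>m. inv\<^bsub>A\<^esub> f (m - k), - k)"
proof -
  interpret A: group A by fact
  interpret W: group "wr_Z A" by (rule wr_Z_group) fact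
  show ?thesis
    by (rule W.inv_equality) (auto simp: wr_Z_simps assms)
qed

lemma wr_Z_nat_pow0: assumes "group A" "\<And>m. f m \<in> carrier A"
  shows "(f,0) [^]\<^bsub>wr_Z A\<^esub> (n::nat) = (\<lambda>m. f m [^]\<^bsub>A\<^esub> n, 0)"
proof -
  interpret A: group A by fact
  show ?thesis
    by (induction n) (auto simp: wr_Z_simps assms)
qed



lemma wr_Z_int_pow0: assumes "group A" "\<And>m. f m \<in> carrier A"
  shows "(f,0) [^]\<^bsub>wr_Z A\<^esub> (n::int) = (\<lambda>m. f m [^]\<^bsub>A\<^esub> n, 0)"
proof -
  interpret A: group A by fact
  have np: "(f,0) [^]\<^bsub>wr_Z A\<^esub> (k::nat) = (\<lambda>m. f m [^]\<^bsub>A\<^esub> k, 0)" for k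
    by (rule wr_Z_nat_pow0[OF assms])
  show ?thesis
  proof (cases "n < 0")
    case True
    have "(f,0) [^]\<^bsub>wr_Z A\<^esub> n = inv\<^bsub>wr_Z A\<^esub> ((f,0) [^]\<^bsub>wr_Z A\<^esub> nat (-n))"
      using True by (simp only: int_pow_def2[of "wr_Z A"] if_True)
    also have "\<dots> = (\<lambda>m. inv\<^bsub>A\<^esub> (f m [^]\<^bsub>A\<^esub> nat (-n)), 0)"
      unfolding np by (subst wr_Z_inv[OF assms(1)]) (auto simp: assms)
    also have "\<dots> = (\<lambda>m. f m [^]\<^bsub>A\<^esub> n, 0)"
      using True by (simp only: int_pow_def2[of A] if_True)
    finally show ?thesis .
  next
    case False
    then show ?thesis by (simp only: int_pow_def2 np if_False)
  qed
qed



lemma wr_Z_nat_pow_s: assumes "group A"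
  shows "(\<lambda>_. \<one>\<^bsub>A\<^esub>, 1) [^]\<^bsub>wr_Z A\<^esub> (n::nat) = (\<lambda>_. \<one>\<^bsub>A\<^esub>, int n)"
proof -
  interpret A: group A by fact
  show ?thesis
    by (induction n) (auto simp: wr_Z_simps)
qed

lemma wr_Z_int_pow_s: assumes "group A"
  shows "(\<lambda>_. \<one>\<^bsub>A\<^esub>, 1) [^]\<^bsub>wr_Z A\<^esub> (n::int) = (\<lambda>_. \<one>\<^bsub>A\<^esub>, n)"
proof -
  interpret A: group A by fact
  show ?thesis
  proof (cases "n < 0")
    case True
    have "(\<lambda>_. \<one>\<^bsub>A\<^esub>, 1) [^]\<^bsub>wr_Z A\<^esub> n = inv\<^bsub>wr_Z A\<^esub> ((\<lambda>_. \<one>\<^bsub>A\<^esub>, int (nat (-n))))"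
      using True by (simp only: int_pow_def2[of "wr_Z A"] if_True wr_Z_nat_pow_s[OF assms])
    also have "\<dots> = (\<lambda>_. \<one>\<^bsub>A\<^esub>, n)"
      using True by (subst wr_Z_inv[OF assms(1)]) auto
    finally show ?thesis .
  next
    case False
    then show ?thesis by (simp only: int_pow_def2[of "wr_Z A"] if_False wr_Z_nat_pow_s[OF assms]) simp
  qed
qed




locale wrs = fixes H :: "('h,'x) monoid_scheme" and a :: "nat \<Rightarrow> 'h"
  assumes grpH: "group H" and aH: "\<forall>i\<ge>1. a i \<in> carrier H"
begin

lemma grpW: "group (wr_Z H)" by (rule wr_Z_group[OF grpH])

lemma gens_sub: "insert (zW H) {bW H a i | i. i \<ge> 1} \<subseteq> carrier (wr_Z H)"
  using aH group.is_monoid[OF grpH] by (auto simp: wr_Z_simps zW_def bW_def)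

lemma subK: "subgroup (carrier (KK H a)) (wr_Z H)"
  unfolding KK_def using group.generate_is_subgroup[OF grpW gens_sub] by simp

lemma grpK: "group (KK H a)"
proof -
  have "group ((wr_Z H)\<lparr>carrier := carrier (KK H a)\<rparr>)"
    by (rule subgroup.subgroup_is_group[OF subK grpW])
  then show ?thesis by (simp add: KK_def)
qed

lemma K_mult: "Group.monoid.mult (KK H a) = Group.monoid.mult (wr_Z H)" by (simp add: KK_def)
lemma K_one: "Group.monoid.one (KK H a) = Group.monoid.one (wr_Z H)" by (simp add: KK_def)

lemma z_K: "zW H \<in> carrier (KK H a)"
  unfolding KK_def by (simp add: generate.incl)
lemma b_K: assumes "i \<ge> 1" shows "bW H a i \<in> carrier (KK H a)"
proof -
  have "bW H a i \<in> generate (wr_Z H) (insert (zW H) {bW H a i | i. i \<ge> 1})"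
    by (rule generate.incl) (use assms in blast)
  then show ?thesis by (simp add: KK_def)
qed

lemma the_pow2: assumes "i \<ge> 1" shows "(THE j. j \<ge> 1 \<and> (2::int) ^ i = 2 ^ j) = i"
proof (rule the_equality)
  show "i \<ge> 1 \<and> (2::int) ^ i = 2 ^ i" using assms by simp
next
  fix j assume "j \<ge> 1 \<and> (2::int) ^ i = 2 ^ j"
  then have "(2::int) ^ i = 2 ^ j" by simp
  then show "j = i" using power_inject_exp[of "2::int" i j] by simp
qed

lemma cfW_def: "fst (cW H a) k = (if k = 1 then zW H
                 else if (\<exists>i::nat. i \<ge> 1 \<and> k = 2 ^ i) then bW H a (THE i. i \<ge> 1 \<and> k = 2 ^ i)
                 else \<one>\<^bsub>KK H a\<^esub>)"
  unfolding cW_def by (simp only: fst_conv)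

lemma cf_pow2: "i \<ge> 1 \<Longrightarrow> fst (cW H a) (2 ^ i) = bW H a i"
proof -
  assume i: "i \<ge> 1"
  have "(2::int) ^ i \<noteq> 1" using i by simp
  moreover have "\<exists>j::nat. j \<ge> 1 \<and> (2::int) ^ i = 2 ^ j" using i by blast
  ultimately show ?thesis unfolding cfW_def using the_pow2[OF i] by simp
qed

lemma cf_other: "k \<noteq> 1 \<Longrightarrow> \<not> (\<exists>i::nat. i \<ge> 1 \<and> k = 2 ^ i) \<Longrightarrow> fst (cW H a) k = \<one>\<^bsub>KK H a\<^esub>"
  unfolding cfW_def by auto

lemma cf_one: "fst (cW H a) 1 = zW H"
  unfolding cfW_def by simp

lemma c_K: "fst (cW H a) k \<in> carrier (KK H a)"
proof -
  consider "k = 1" | i where "i \<ge> 1" "k = 2 ^ i" | "k \<noteq> 1" "\<not> (\<exists>i::nat. i \<ge> 1 \<and> k = 2 ^ i)"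
    by blast
  then show ?thesis
  proof cases
    case 1 then show ?thesis using cf_one z_K by simp
  next
    case 2 then show ?thesis using cf_pow2 b_K by simp
  next
    case 3 then show ?thesis using cf_other monoid.one_closed[OF group.is_monoid[OF grpK]] by simp
  qed
qed

lemma grpV: "group (wr_Z (KK H a))" by (rule wr_Z_group[OF grpK])

lemma c_V: "cW H a \<in> carrier (wr_Z (KK H a))"
  using c_K by (simp add: wr_Z_simps cW_def)
lemma s_V: "sW H a \<in> carrier (wr_Z (KK H a))"
  using group.is_monoid[OF grpK] by (simp add: wr_Z_simps sW_def)

lemma subG: "subgroup (carrier (GG H a)) (wr_Z (KK H a))"
  unfolding GG_def using group.generate_is_subgroup[OF grpV] c_V s_V by simp

lemma grpG: "group (GG H a)"
proof -
  have "group ((wr_Z (KK H a))\<lparr>carrier := carrier (GG H a)\<rparr>)"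
    by (rule subgroup.subgroup_is_group[OF subG grpV])
  then show ?thesis by (simp add: GG_def)
qed

lemma G_mult: "Group.monoid.mult (GG H a) = Group.monoid.mult (wr_Z (KK H a))" by (simp add: GG_def)
lemma G_one: "Group.monoid.one (GG H a) = Group.monoid.one (wr_Z (KK H a))" by (simp add: GG_def)

lemma c_G: "cW H a \<in> carrier (GG H a)"
  unfolding GG_def by (simp add: generate.incl)
lemma s_G: "sW H a \<in> carrier (GG H a)"
  unfolding GG_def by (simp add: generate.incl)

lemma G_eq: "GG H a = (wr_Z (KK H a))\<lparr>carrier := carrier (GG H a)\<rparr>"
  by (simp add: GG_def)

lemma G_int_pow: "x \<in> carrier (GG H a) \<Longrightarrow> x [^]\<^bsub>GG H a\<^esub> (n::int) = x [^]\<^bsub>wr_Z (KK H a)\<^esub> n"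
  using group.int_pow_consistent[OF grpV subG, of x n] G_eq by metis

lemma G_inv: "x \<in> carrier (GG H a) \<Longrightarrow> inv\<^bsub>GG H a\<^esub> x = inv\<^bsub>wr_Z (KK H a)\<^esub> x"
  using group.m_inv_consistent[OF grpV subG, of x] G_eq by metis

end




context wrs begin

abbreviation "KH \<equiv> KK H a"
abbreviation "VH \<equiv> wr_Z (KK H a)"
abbreviation "GH \<equiv> GG H a"
definition cf where "cf = fst (cW H a)"

lemma cf_K: "cf k \<in> carrier KH" unfolding cf_def by (rule c_K)
lemma cf_1: "cf 1 = zW H" unfolding cf_def by (rule cf_one)
lemma cf_2: "i \<ge> 1 \<Longrightarrow> cf (2 ^ i) = bW H a i" unfolding cf_def by (rule cf_pow2)
lemma cf_o: "k \<noteq> 1 \<Longrightarrow> \<not> (\<exists>i::nat. i \<ge> 1 \<and> k = 2 ^ i) \<Longrightarrow> cf k = \<one>\<^bsub>KH\<^esub>"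
  unfolding cf_def by (rule cf_other)

lemma K_group: "group KH" by (rule grpK)
lemmas KM = group.is_monoid[OF grpK]

lemma cW_eq: "cW H a = (cf, 0)" by (simp add: cW_def cf_def)
lemma sW_eq: "sW H a = (\<lambda>_. \<one>\<^bsub>KH\<^esub>, 1)" by (simp add: sW_def)

lemma s_pow: "sW H a [^]\<^bsub>GH\<^esub> (g::int) = (\<lambda>_. \<one>\<^bsub>KH\<^esub>, g)"
  using G_int_pow[OF s_G, of g] wr_Z_int_pow_s[OF grpK, of g] sW_eq by simp

lemma c_pow: "cW H a [^]\<^bsub>GH\<^esub> (b::int) = (\<lambda>x. cf x [^]\<^bsub>KH\<^esub> b, 0)"
  using G_int_pow[OF c_G, where n=b] wr_Z_int_pow0[OF grpK cf_K, where n=b] cW_eq by simp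

lemma mult_s: "(\<And>x. f x \<in> carrier KH) \<Longrightarrow>
   (\<lambda>_. \<one>\<^bsub>KH\<^esub>, g) \<otimes>\<^bsub>VH\<^esub> (f,k) = (\<lambda>x. f (x+g), g+k)"
  using monoid.l_one[OF KM] by (simp add: wr_Z_simps)

lemma mult_0: "(f,0) \<otimes>\<^bsub>VH\<^esub> (h,k) = (\<lambda>x. f x \<otimes>\<^bsub>KH\<^esub> h x, k)"
  by (simp add: wr_Z_simps)

lemma mult_s_r: "(\<And>x. f x \<in> carrier KH) \<Longrightarrow>
   (f,k) \<otimes>\<^bsub>VH\<^esub> (\<lambda>_. \<one>\<^bsub>KH\<^esub>, g) = (f, k+g)"
  using monoid.r_one[OF KM] by (simp add: wr_Z_simps)

lemma V_one: "\<one>\<^bsub>VH\<^esub> = (\<lambda>_. \<one>\<^bsub>KH\<^esub>, 0)" by (simp add: wr_Z_simps)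

lemma fold_closed: "(\<And>j. j \<in> set L \<Longrightarrow> f j \<in> carrier KH) \<Longrightarrow>
    foldr (\<lambda>j acc. f j \<otimes>\<^bsub>KH\<^esub> acc) L \<one>\<^bsub>KH\<^esub> \<in> carrier KH"
  by (induction L) (auto intro: group.is_monoid[OF grpK] monoid.m_closed monoid.one_closed)

lemma conj_s: "conjW GH (cW H a) (sW H a [^]\<^bsub>GH\<^esub> (g::int)) = (\<lambda>x. cf (x+g), 0)"
proof -
  have sg: "sW H a [^]\<^bsub>GH\<^esub> g \<in> carrier GH" using group.int_pow_closed[OF grpG s_G] .
  have inv: "inv\<^bsub>GH\<^esub> (\<lambda>_. \<one>\<^bsub>KH\<^esub>, g) = (\<lambda>_. \<one>\<^bsub>KH\<^esub>, -g)"
    using G_inv[OF sg] s_pow wr_Z_inv[OF grpK, of "\<lambda>_. \<one>\<^bsub>KH\<^esub>" g]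
      monoid.one_closed[OF group.is_monoid[OF grpK]] monoid.inv_one[OF KM] by simp
  show ?thesis
    unfolding conjW_def G_mult inv s_pow cW_eq
    using mult_s[of cf g 0] mult_s_r[of "\<lambda>x. cf (x+g)" g "-g"] cf_K by simp
qed

lemma conj_closed: "conjW GH (cW H a) (sW H a [^]\<^bsub>GH\<^esub> (g::int)) \<in> carrier GH"
  unfolding conjW_def
  using group.int_pow_closed[OF grpG s_G] c_G group.inv_closed[OF grpG]
    monoid.m_closed[OF group.is_monoid[OF grpG]] by blast

lemma conj_pow: "conjW GH (cW H a) (sW H a [^]\<^bsub>GH\<^esub> (g::int)) [^]\<^bsub>GH\<^esub> (b::int)
   = (\<lambda>x. cf (x+g) [^]\<^bsub>KH\<^esub> b, 0)"
  using G_int_pow[OF conj_closed[of g], where n=b] conj_s wr_Z_int_pow0[OF grpK, of "\<lambda>x. cf (x+g)", where n=b] cf_K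
  by simp

lemma fold_V: "foldr (\<lambda>j acc. (h j, 0) \<otimes>\<^bsub>VH\<^esub> acc) L \<one>\<^bsub>VH\<^esub>
   = (\<lambda>x. foldr (\<lambda>j acc. h j x \<otimes>\<^bsub>KH\<^esub> acc) L \<one>\<^bsub>KH\<^esub>, 0)"
  by (induction L) (auto simp: V_one mult_0)

lemma FW_eq: "FW H a n alpha beta =
   (\<lambda>x. foldr (\<lambda>j acc. cf (x + gammaW alpha j) [^]\<^bsub>KH\<^esub> beta j \<otimes>\<^bsub>KH\<^esub> acc) [1..<n+1] \<one>\<^bsub>KH\<^esub>, 0)"
  unfolding FW_def conj_pow G_mult G_one fold_V[symmetric] ..

end




context wrs begin

lemma word_gen:
  fixes alpha beta :: "nat \<Rightarrow> int"
  shows "sW H a [^]\<^bsub>GH\<^esub> (g::int) \<otimes>\<^bsub>GH\<^esub>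
   foldr (\<lambda>j acc. cW H a [^]\<^bsub>GH\<^esub> beta j \<otimes>\<^bsub>GH\<^esub> (sW H a [^]\<^bsub>GH\<^esub> alpha j \<otimes>\<^bsub>GH\<^esub> acc)) [j..<m] \<one>\<^bsub>GH\<^esub>
 = (\<lambda>x. foldr (\<lambda>k acc. cf (x + g + (\<Sum>i\<in>{j..<k}. alpha i)) [^]\<^bsub>KH\<^esub> beta k \<otimes>\<^bsub>KH\<^esub> acc) [j..<m] \<one>\<^bsub>KH\<^esub>,
    g + (\<Sum>i\<in>{j..<m}. alpha i))"
proof (induction "m - j" arbitrary: j g)
  case 0
  then have e: "[j..<m] = []" by simp
  show ?case unfolding e using mult_s_r[of "\<lambda>_. \<one>\<^bsub>KH\<^esub>" g 0] monoid.one_closed[OF KM] 0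
    by (simp add: s_pow G_mult G_one V_one)
next
  case (Suc d)
  then have jm: "j < m" by simp
  have e: "[j..<m] = j # [Suc j..<m]" using jm by (simp add: upt_conv_Cons)
  define R where "R = foldr (\<lambda>j acc. cW H a [^]\<^bsub>GH\<^esub> beta j \<otimes>\<^bsub>GH\<^esub> (sW H a [^]\<^bsub>GH\<^esub> alpha j \<otimes>\<^bsub>GH\<^esub> acc)) [Suc j..<m] \<one>\<^bsub>GH\<^esub>"
  define A where "A = (\<lambda>x. foldr (\<lambda>k acc. cf (x + alpha j + (\<Sum>i\<in>{Suc j..<k}. alpha i)) [^]\<^bsub>KH\<^esub> beta k \<otimes>\<^bsub>KH\<^esub> acc) [Suc j..<m] \<one>\<^bsub>KH\<^esub>)"
  have IH: "sW H a [^]\<^bsub>GH\<^esub> alpha j \<otimes>\<^bsub>GH\<^esub> R = (A, alpha j + (\<Sum>i\<in>{Suc j..<m}. alpha i))"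
    using Suc.hyps(1)[of "Suc j" "alpha j"] Suc.hyps(2) unfolding R_def A_def by simp
  have IH': "(\<lambda>_. \<one>\<^bsub>KH\<^esub>, alpha j) \<otimes>\<^bsub>VH\<^esub> R = (A, alpha j + (\<Sum>i\<in>{Suc j..<m}. alpha i))"
    using IH by (simp only: s_pow G_mult)
  have AK: "A x \<in> carrier KH" for x
    unfolding A_def by (rule fold_closed) (rule group.int_pow_closed[OF grpK cf_K])
  have cbK: "cf x [^]\<^bsub>KH\<^esub> beta j \<in> carrier KH" for x using group.int_pow_closed[OF grpK cf_K] .
  have "sW H a [^]\<^bsub>GH\<^esub> g \<otimes>\<^bsub>GH\<^esub> (cW H a [^]\<^bsub>GH\<^esub> beta j \<otimes>\<^bsub>GH\<^esub> (sW H a [^]\<^bsub>GH\<^esub> alpha j \<otimes>\<^bsub>GH\<^esub> R))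
     = (\<lambda>x. cf (x + g) [^]\<^bsub>KH\<^esub> beta j \<otimes>\<^bsub>KH\<^esub> A (x + g), g + (alpha j + (\<Sum>i\<in>{Suc j..<m}. alpha i)))"
    unfolding s_pow c_pow G_mult IH' mult_0
    by (rule mult_s) (use cbK AK monoid.m_closed[OF KM] in blast)
  also have "\<dots> = (\<lambda>x. foldr (\<lambda>k acc. cf (x + g + (\<Sum>i\<in>{j..<k}. alpha i)) [^]\<^bsub>KH\<^esub> beta k \<otimes>\<^bsub>KH\<^esub> acc) [j..<m] \<one>\<^bsub>KH\<^esub>,
    g + (\<Sum>i\<in>{j..<m}. alpha i))"
  proof -
    have s1: "(\<Sum>i\<in>{j..<m}. alpha i) = alpha j + (\<Sum>i\<in>{Suc j..<m}. alpha i)"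
      using jm by (simp add: sum.atLeast_Suc_lessThan)
    have s2: "A (x + g) = foldr (\<lambda>k acc. cf (x + g + (\<Sum>i\<in>{j..<k}. alpha i)) [^]\<^bsub>KH\<^esub> beta k \<otimes>\<^bsub>KH\<^esub> acc) [Suc j..<m] \<one>\<^bsub>KH\<^esub>" for x
      unfolding A_def
    proof (rule foldr_cong)
      fix k acc assume "k \<in> set [Suc j..<m]"
      then have "j < k" by simp
      then have "(\<Sum>i\<in>{j..<k}. alpha i) = alpha j + (\<Sum>i\<in>{Suc j..<k}. alpha i)"
        by (simp add: sum.atLeast_Suc_lessThan)
      then show "cf (x + g + alpha j + (\<Sum>i\<in>{Suc j..<k}. alpha i)) [^]\<^bsub>KH\<^esub> beta k \<otimes>\<^bsub>KH\<^esub> acc =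
                 cf (x + g + (\<Sum>i\<in>{j..<k}. alpha i)) [^]\<^bsub>KH\<^esub> beta k \<otimes>\<^bsub>KH\<^esub> acc"
        by (simp add: add.assoc)
    qed auto
    show ?thesis unfolding e s1 by (simp add: s2)
  qed
  finally show ?case unfolding e R_def by simp
qed

end




context wrs begin

lemma gamma_split: "k \<ge> 1 \<Longrightarrow> alpha 0 + (\<Sum>i\<in>{1..<k}. alpha i) = gammaW alpha k"
  unfolding gammaW_def by (simp add: lessThan_atLeast0 sum.atLeast_Suc_lessThan)

lemma wordW_eq:
  fixes alpha beta :: "nat \<Rightarrow> int"
  shows "wordW H a n alpha beta = (fst (FW H a n alpha beta), (\<Sum>i\<le>n. alpha i))"
proof -
  have s: "alpha 0 + (\<Sum>i\<in>{1..<n+1}. alpha i) = (\<Sum>i\<le>n. alpha i)"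
    using gamma_split[of "n+1" alpha] unfolding gammaW_def by (simp add: lessThan_Suc_atMost)
  have f: "foldr (\<lambda>k acc. cf (x + alpha 0 + (\<Sum>i\<in>{1..<k}. alpha i)) [^]\<^bsub>KH\<^esub> beta k \<otimes>\<^bsub>KH\<^esub> acc) [1..<n+1] \<one>\<^bsub>KH\<^esub>
     = foldr (\<lambda>j acc. cf (x + gammaW alpha j) [^]\<^bsub>KH\<^esub> beta j \<otimes>\<^bsub>KH\<^esub> acc) [1..<n+1] \<one>\<^bsub>KH\<^esub>" for x
  proof (rule foldr_cong)
    fix k acc assume "k \<in> set [1..<n+1]"
    then have "k \<ge> 1" by auto
    then show "cf (x + alpha 0 + (\<Sum>i\<in>{1..<k}. alpha i)) [^]\<^bsub>KH\<^esub> beta k \<otimes>\<^bsub>KH\<^esub> acc =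
          cf (x + gammaW alpha k) [^]\<^bsub>KH\<^esub> beta k \<otimes>\<^bsub>KH\<^esub> acc"
      using gamma_split[of k alpha] by (simp add: add.assoc)
  qed auto
  show ?thesis
    unfolding wordW_def word_gen FW_eq s f by simp
qed

definition psi where "psi x = (\<lambda>\<mu>::int. if \<mu> = 1 then x else \<one>\<^bsub>KH\<^esub>, (0::int))"

lemma cf_supp: assumes i: "i \<ge> 1" and x: "x \<noteq> 1"
  shows "cf x = \<one>\<^bsub>KH\<^esub> \<or> cf (x + (2 ^ i - 1)) = \<one>\<^bsub>KH\<^esub>"
proof (rule ccontr)
  assume "\<not> ?thesis"
  then have c1: "cf x \<noteq> \<one>\<^bsub>KH\<^esub>" and c2: "cf (x + (2 ^ i - 1)) \<noteq> \<one>\<^bsub>KH\<^esub>" by auto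
  from c1 x cf_o obtain j :: nat where j: "j \<ge> 1" "x = 2 ^ j" by blast
  have ne1: "x + (2 ^ i - 1) \<noteq> 1"
  proof -
    have "(2::int) ^ j \<ge> 2" using j(1)
      by (metis one_le_numeral power_increasing power_one_right)
    moreover have "(2::int) ^ i \<ge> 2" using i
      by (metis one_le_numeral power_increasing power_one_right)
    ultimately show ?thesis using j by simp
  qed
  from c2 ne1 cf_o obtain k :: nat where k: "k \<ge> 1" "x + (2 ^ i - 1) = 2 ^ k" by blast
  have ev: "even ((2::int) ^ l)" if "l \<ge> 1" for l :: nat using that by simp
  obtain u where u: "(2::int) ^ j = 2 * u" using ev[OF j(1)] by blast
  obtain v where v: "(2::int) ^ i = 2 * v" using ev[OF i] by blast
  obtain w where w: "(2::int) ^ k = 2 * w" using ev[OF k(1)] by blast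
  have "2 * u + (2 * v - 1) = 2 * w" using k(2) j(2) u v w by simp
  then show False by presburger
qed

lemma comm_eq: assumes i: "i \<ge> 1"
  shows "commW GH (cW H a) (conjW GH (cW H a) (sW H a [^]\<^bsub>GH\<^esub> ((2::int) ^ i - 1)))
         = psi (commW KH (zW H) (bW H a i))"
proof -
  interpret K: group KH by (rule grpK)
  define m :: int where "m = 2 ^ i - 1"
  have cinv: "inv\<^bsub>GH\<^esub> (cW H a) = (\<lambda>x. inv\<^bsub>KH\<^esub> cf x, 0)"
    using G_inv[OF c_G] wr_Z_inv[OF grpK, of cf 0] cf_K cW_eq by simp
  have c'inv: "inv\<^bsub>GH\<^esub> (\<lambda>x. cf (x + m), 0) = (\<lambda>x. inv\<^bsub>KH\<^esub> cf (x + m), 0)"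
    using G_inv[OF conj_closed[of m]] conj_s[of m]
      wr_Z_inv[OF grpK, of "\<lambda>x. cf (x + m)" 0] cf_K by simp
  have lhs: "commW GH (cW H a) (conjW GH (cW H a) (sW H a [^]\<^bsub>GH\<^esub> m))
     = (\<lambda>x. cf x \<otimes>\<^bsub>KH\<^esub> cf (x + m) \<otimes>\<^bsub>KH\<^esub> inv\<^bsub>KH\<^esub> cf x \<otimes>\<^bsub>KH\<^esub> inv\<^bsub>KH\<^esub> cf (x + m), 0)"
    unfolding commW_def conj_s cinv c'inv G_mult
    by (simp add: cW_eq mult_0)
  have pt: "cf x \<otimes>\<^bsub>KH\<^esub> cf (x + m) \<otimes>\<^bsub>KH\<^esub> inv\<^bsub>KH\<^esub> cf x \<otimes>\<^bsub>KH\<^esub> inv\<^bsub>KH\<^esub> cf (x + m)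
      = (if x = 1 then commW KH (zW H) (bW H a i) else \<one>\<^bsub>KH\<^esub>)" for x
  proof (cases "x = 1")
    case True
    have "1 + m = 2 ^ i" unfolding m_def by simp
    then show ?thesis using True cf_1 cf_2[OF i] by (simp add: commW_def)
  next
    case False
    then have "cf x = \<one>\<^bsub>KH\<^esub> \<or> cf (x + m) = \<one>\<^bsub>KH\<^esub>" using cf_supp[OF i] unfolding m_def by blast
    then show ?thesis using False cf_K[of x] cf_K[of "x+m"]
      by (auto simp: K.r_inv)
  qed
  show ?thesis unfolding m_def[symmetric] lhs psi_def pt by simp
qed

lemma psi_hom: "psi \<in> hom KH VH"
proof (rule homI)
  interpret K: group KH by (rule grpK)
  fix x assume "x \<in> carrier KH"
  then show "psi x \<in> carrier VH" by (simp add: psi_def wr_Z_simps)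
next
  interpret K: group KH by (rule grpK)
  fix x y assume "x \<in> carrier KH" "y \<in> carrier KH"
  then show "psi (x \<otimes>\<^bsub>KH\<^esub> y) = psi x \<otimes>\<^bsub>VH\<^esub> psi y"
    by (auto simp: psi_def wr_Z_simps)
qed

end




context wrs begin

lemma T0_sub: "{commW KH (zW H) (bW H a i) | i. i \<ge> 1} \<subseteq> carrier KH"
proof -
  interpret K: group KH by (rule grpK)
  show ?thesis using z_K b_K by (auto simp: commW_def)
qed

lemma img:
  assumes hom: "\<phi> \<in> hom H GH"
    and gen: "generate H {a i | i. i \<ge> 1} = carrier H"
    and phi_a: "\<forall>i\<ge>1. \<phi> (a i) = commW GH (cW H a)
                 (conjW GH (cW H a) (sW H a [^]\<^bsub>GH\<^esub> ((2::int) ^ i - 1)))"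
  shows "\<phi> ` carrier H = psi ` generate KH {commW KH (zW H) (bW H a i) | i. i \<ge> 1}"
proof -
  let ?A0 = "{a i | i. i \<ge> 1}"
  let ?T0 = "{commW KH (zW H) (bW H a i) | i. i \<ge> 1}"
  have gh: "group_hom H GH \<phi>"
    unfolding group_hom_def group_hom_axioms_def using grpH grpG hom by simp
  have gpsi: "group_hom KH VH psi"
    unfolding group_hom_def group_hom_axioms_def using grpK grpV psi_hom by simp
  have A0: "?A0 \<subseteq> carrier H" using aH by auto
  have e1: "\<phi> ` carrier H = generate GH (\<phi> ` ?A0)"
    using group_hom.generate_img[OF gh A0] gen by simp
  have pa: "\<phi> (a i) = psi (commW KH (zW H) (bW H a i))" if "i \<ge> 1" for i
    using phi_a comm_eq that by simp
  have e2: "\<phi> ` ?A0 = psi ` ?T0"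
  proof
    show "\<phi> ` ?A0 \<subseteq> psi ` ?T0" using pa by auto
  next
    show "psi ` ?T0 \<subseteq> \<phi> ` ?A0"
    proof
      fix y assume "y \<in> psi ` ?T0"
      then obtain i where i: "i \<ge> 1" "y = psi (commW KH (zW H) (bW H a i))" by blast
      then have "y = \<phi> (a i)" using pa by simp
      then show "y \<in> \<phi> ` ?A0" using i(1) by blast
    qed
  qed
  have sub: "\<phi> ` ?A0 \<subseteq> carrier GH"
    using A0 hom by (force simp: hom_def Pi_def)
  have e3: "generate GH (\<phi> ` ?A0) = generate VH (\<phi> ` ?A0)"
    using group.generate_consistent[OF grpV sub subG] G_eq by metis
  have e4: "generate VH (psi ` ?T0) = psi ` generate KH ?T0"
    using group_hom.generate_img[OF gpsi T0_sub] .
  show ?thesis using e1 e2 e3 e4 by simp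
qed

lemma psi_mem: "(F, g) \<in> psi ` T \<longleftrightarrow> g = 0 \<and> (\<forall>\<mu>. \<mu> \<noteq> 1 \<longrightarrow> F \<mu> = \<one>\<^bsub>KH\<^esub>) \<and> F 1 \<in> T"
proof
  assume "(F, g) \<in> psi ` T"
  then obtain x where "x \<in> T" "(F, g) = psi x" by blast
  then show "g = 0 \<and> (\<forall>\<mu>. \<mu> \<noteq> 1 \<longrightarrow> F \<mu> = \<one>\<^bsub>KH\<^esub>) \<and> F 1 \<in> T"
    by (auto simp: psi_def)
next
  assume h: "g = 0 \<and> (\<forall>\<mu>. \<mu> \<noteq> 1 \<longrightarrow> F \<mu> = \<one>\<^bsub>KH\<^esub>) \<and> F 1 \<in> T"
  then have "(F, g) = psi (F 1)" by (auto simp: psi_def)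
  then show "(F, g) \<in> psi ` T" using h by blast
qed

end




lemma list_sum_upt: "sum_list (map f [1..<n+1]) = (\<Sum>j\<in>{1..n}. f j)"
  unfolding interv_sum_list_conv_sum_set_nat set_upt by (metis Suc_eq_plus1 atLeastLessThanSuc_atLeastAtMost)

lemma pow_unique_aux:
  fixes M \<mu> :: int and k k' :: nat
  assumes "\<bar>\<mu>\<bar> > 3 * M" "\<bar>2 ^ k - \<mu>\<bar> \<le> M" "\<bar>2 ^ k' - \<mu>\<bar> \<le> M" "k < k'"
  shows False
proof -
  have "(2::int) ^ Suc k \<le> 2 ^ k'" using assms(4) by (intro power_increasing) auto
  then have q: "(2::int) ^ k' \<ge> 2 * 2 ^ k" by simp
  have p: "(2::int) ^ k > 0" by simp
  show False using assms(1-3) q p by linarith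
qed

lemma pow_unique:
  fixes M \<mu> :: int and k k' :: nat
  assumes "\<bar>\<mu>\<bar> > 3 * M" "\<bar>2 ^ k - \<mu>\<bar> \<le> M" "\<bar>2 ^ k' - \<mu>\<bar> \<le> M"
  shows "k = k'"
  using pow_unique_aux[OF assms] pow_unique_aux[OF assms(1,3,2)] by (metis linorder_neqE_nat)

lemma not_one_aux:
  fixes M \<mu> \<gamma> :: int
  assumes "\<bar>\<mu>\<bar> > 3 * M" "\<bar>\<gamma>\<bar> \<le> M" "\<mu> \<noteq> 1"
  shows "\<mu> + \<gamma> \<noteq> 1"
  using assms by linarith

context wrs begin

lemma snd_mult: "snd (x \<otimes>\<^bsub>KH\<^esub> y) = snd x + snd y"
  by (simp add: K_mult wr_Z_mult_snd)

lemma snd_one: "snd \<one>\<^bsub>KH\<^esub> = 0" by (simp add: K_one wr_Z_simps)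

lemma snd_inv: assumes "x \<in> carrier KH" shows "snd (inv\<^bsub>KH\<^esub> x) = - snd x"
proof -
  interpret K: group KH by (rule grpK)
  have "snd (x \<otimes>\<^bsub>KH\<^esub> inv\<^bsub>KH\<^esub> x) = 0" using assms snd_one by simp
  then show ?thesis by (simp add: snd_mult)
qed

lemma snd_npow: assumes "x \<in> carrier KH" shows "snd (x [^]\<^bsub>KH\<^esub> (m::nat)) = int m * snd x"
  by (induction m) (simp_all add: snd_one snd_mult algebra_simps)

lemma snd_pow: assumes "x \<in> carrier KH" shows "snd (x [^]\<^bsub>KH\<^esub> (b::int)) = b * snd x"
proof (cases "b < 0")
  case True
  interpret K: group KH by (rule grpK)
  have "x [^]\<^bsub>KH\<^esub> b = inv\<^bsub>KH\<^esub> (x [^]\<^bsub>KH\<^esub> nat (-b))"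
    using True by (simp only: int_pow_def2[of KH] if_True)
  then show ?thesis using True snd_inv[of "x [^]\<^bsub>KH\<^esub> nat (-b)"] snd_npow[OF assms, of "nat (-b)"] assms
    by simp
next
  case False
  then have "x [^]\<^bsub>KH\<^esub> b = x [^]\<^bsub>KH\<^esub> nat b"
    by (simp only: int_pow_def2[of KH] if_False)
  then show ?thesis using False snd_npow[OF assms, of "nat b"] by simp
qed

lemma snd_cf: "snd (cf x) = (if x = 1 then 1 else 0)"
proof -
  consider "x = 1" | i where "i \<ge> 1" "x = 2 ^ i" | "x \<noteq> 1" "\<not> (\<exists>i::nat. i \<ge> 1 \<and> x = 2 ^ i)"
    by blast
  then show ?thesis
  proof cases
    case 1 then show ?thesis using cf_1 by (simp add: zW_def)
  next
    case 2
    have "(2::int) ^ i \<noteq> 1" using 2(1) by simp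
    then show ?thesis using 2 cf_2 by (simp add: bW_def)
  next
    case 3 then show ?thesis using cf_o snd_one by simp
  qed
qed

lemma snd_fold:
  fixes b :: "nat \<Rightarrow> int"
  assumes "\<And>j. f j \<in> carrier KH"
  shows "snd (foldr (\<lambda>j acc. f j [^]\<^bsub>KH\<^esub> b j \<otimes>\<^bsub>KH\<^esub> acc) L \<one>\<^bsub>KH\<^esub>) = sum_list (map (\<lambda>j. b j * snd (f j)) L)"
  by (induction L) (simp_all add: snd_one snd_mult snd_pow assms)

lemma T_snd: "x \<in> generate KH {commW KH (zW H) (bW H a i) | i. i \<ge> 1} \<Longrightarrow> snd x = 0"
proof (induction rule: generate.induct)
  case one then show ?case by (rule snd_one)
next
  case (incl h)
  then obtain i where i: "i \<ge> 1" "h = commW KH (zW H) (bW H a i)" by blast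
  show ?case using i z_K b_K[OF i(1)]
    by (simp add: commW_def snd_mult snd_inv)
next
  case (inv h)
  then obtain i where i: "i \<ge> 1" "h = commW KH (zW H) (bW H a i)" by blast
  have "h \<in> carrier KH" using T0_sub i by blast
  moreover have "snd h = 0" using i z_K b_K[OF i(1)]
    by (simp add: commW_def snd_mult snd_inv)
  ultimately show ?case by (simp add: snd_inv)
next
  case (eng h1 h2)
  then show ?case by (simp add: snd_mult)
qed

lemma fold_if_pow:
  fixes b :: "nat \<Rightarrow> int"
  assumes x: "x \<in> carrier KH"
  shows "foldr (\<lambda>j acc. (if P j then x else \<one>\<^bsub>KH\<^esub>) [^]\<^bsub>KH\<^esub> b j \<otimes>\<^bsub>KH\<^esub> acc) L \<one>\<^bsub>KH\<^esub>
       = x [^]\<^bsub>KH\<^esub> sum_list (map (\<lambda>j. if P j then b j else 0) L)"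
proof (induction L)
  case Nil
  interpret K: group KH by (rule grpK)
  show ?case by simp
next
  case (Cons j L)
  interpret K: group KH by (rule grpK)
  show ?case
    using x by (simp add: Cons.IH K.int_pow_mult)
qed

end




context wrs begin

lemma main:
  fixes \<phi> :: "'h \<Rightarrow> (int \<Rightarrow> (int \<Rightarrow> 'h) \<times> int) \<times> int"
    and n :: nat and alpha beta :: "nat \<Rightarrow> int"
  assumes hom: "\<phi> \<in> hom H GH"
    and gen: "generate H {a i | i. i \<ge> 1} = carrier H"
    and phi_a: "\<forall>i\<ge>1. \<phi> (a i) = commW GH (cW H a)
                 (conjW GH (cW H a) (sW H a [^]\<^bsub>GH\<^esub> ((2::int) ^ i - 1)))"
    and n1: "n \<ge> 1"
  shows "wordW H a n alpha beta \<in> \<phi> ` carrier H \<longleftrightarrow>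
    ((\<Sum>i\<le>n. alpha i) = 0
     \<and> (\<forall>i\<in>{1..n}. (\<Sum>j\<in>{j\<in>{1..n}. gammaW alpha j = gammaW alpha i}. beta j) = 0)
     \<and> (\<forall>\<mu>::int. \<mu> \<noteq> 1 \<and> \<bar>\<mu>\<bar> \<le> 3 * Max ((\<lambda>j. \<bar>gammaW alpha j\<bar>) ` {1..n})
           \<longrightarrow> fst (FW H a n alpha beta) \<mu> = \<one>\<^bsub>KK H a\<^esub>)
     \<and> fst (FW H a n alpha beta) 1
         \<in> generate (KK H a) {commW (KK H a) (zW H) (bW H a i) | i. i \<ge> 1})"
proof -
  interpret K: group KH by (rule grpK)
  define F where "F = fst (FW H a n alpha beta)"
  define T where "T = generate KH {commW KH (zW H) (bW H a i) | i. i \<ge> 1}"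
  define g where "g = gammaW alpha"
  define M where "M = Max ((\<lambda>j. \<bar>g j\<bar>) ` {1..n})"
  have Fx: "F x = foldr (\<lambda>j acc. cf (x + g j) [^]\<^bsub>KH\<^esub> beta j \<otimes>\<^bsub>KH\<^esub> acc) [1..<n+1] \<one>\<^bsub>KH\<^esub>" for x
    unfolding F_def g_def FW_eq by simp
  have iff1: "wordW H a n alpha beta \<in> \<phi> ` carrier H \<longleftrightarrow>
      (\<Sum>i\<le>n. alpha i) = 0 \<and> (\<forall>\<mu>. \<mu> \<noteq> 1 \<longrightarrow> F \<mu> = \<one>\<^bsub>KH\<^esub>) \<and> F 1 \<in> T"
    unfolding img[OF hom gen phi_a] wordW_eq F_def T_def by (rule psi_mem)
  have Mge: "\<bar>g j\<bar> \<le> M" if "j \<in> {1..n}" for j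
    unfolding M_def by (rule Max_ge) (use that in auto)
  have sndF: "snd (F \<mu>) = (\<Sum>j\<in>{1..n}. if \<mu> + g j = 1 then beta j else 0)" for \<mu>
    unfolding Fx snd_fold[OF cf_K] list_sum_upt snd_cf by (rule sum.cong) auto
  have blk: "(\<Sum>j\<in>{1..n}. if P (g j) then beta j else 0) = (\<Sum>j\<in>{j\<in>{1..n}. g j = g i}. beta j)"
    if "\<And>j. P (g j) \<longleftrightarrow> g j = g i" for P i
  proof -
    have "(\<Sum>j\<in>{1..n}. if P (g j) then beta j else 0) = (\<Sum>j\<in>{1..n}. if g j = g i then beta j else 0)"
      by (simp add: that)
    also have "\<dots> = (\<Sum>j\<in>{j\<in>{1..n}. g j = g i}. beta j)"
      by (rule sum.inter_filter[symmetric]) simp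
    finally show ?thesis .
  qed
  have big: "F \<mu> = \<one>\<^bsub>KH\<^esub>"
    if blocks: "\<forall>i\<in>{1..n}. (\<Sum>j\<in>{j\<in>{1..n}. g j = g i}. beta j) = 0"
      and mu: "\<bar>\<mu>\<bar> > 3 * M" "\<mu> \<noteq> 1" for \<mu>
  proof -
    have ne1: "\<mu> + g j \<noteq> 1" if "j \<in> {1..n}" for j
      using not_one_aux[OF mu(1) Mge[OF that] mu(2)] .
    obtain k where k1: "k \<ge> 1"
      and hk: "\<And>j. j \<in> {1..n} \<Longrightarrow> cf (\<mu> + g j) = (if \<mu> + g j = 2 ^ k then bW H a k else \<one>\<^bsub>KH\<^esub>)"
    proof (cases "\<exists>j0\<in>{1..n}. \<exists>k::nat. k \<ge> 1 \<and> \<mu> + g j0 = 2 ^ k")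
      case True
      then obtain j0 k where j0: "j0 \<in> {1..n}" "k \<ge> 1" "\<mu> + g j0 = 2 ^ k" by blast
      show ?thesis
      proof (rule that[OF j0(2)])
        fix j assume j: "j \<in> {1..n}"
        show "cf (\<mu> + g j) = (if \<mu> + g j = 2 ^ k then bW H a k else \<one>\<^bsub>KH\<^esub>)"
        proof (cases "\<mu> + g j = 2 ^ k")
          case True then show ?thesis using cf_2[OF j0(2)] by simp
        next
          case False
          have "\<not> (\<exists>k'::nat. k' \<ge> 1 \<and> \<mu> + g j = 2 ^ k')"
          proof
            assume "\<exists>k'::nat. k' \<ge> 1 \<and> \<mu> + g j = 2 ^ k'"
            then obtain k' :: nat where k': "\<mu> + g j = 2 ^ k'" by blast
            have "\<bar>2 ^ k - \<mu>\<bar> \<le> M" using Mge[OF j0(1)] j0(3) by simp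
            moreover have "\<bar>2 ^ k' - \<mu>\<bar> \<le> M" using Mge[OF j] k' by simp
            ultimately have "k = k'" using pow_unique[OF mu(1)] by blast
            then show False using False k' by simp
          qed
          then show ?thesis using cf_o ne1[OF j] False by simp
        qed
      qed
    next
      case False
      show ?thesis
      proof (rule that[of 1])
        fix j assume j: "j \<in> {1..n}"
        have "\<not> (\<exists>k::nat. k \<ge> 1 \<and> \<mu> + g j = 2 ^ k)" using False j by blast
        moreover then have "\<mu> + g j \<noteq> 2 ^ 1" by auto
        ultimately show "cf (\<mu> + g j) = (if \<mu> + g j = 2 ^ 1 then bW H a 1 else \<one>\<^bsub>KH\<^esub>)"
          using cf_o ne1[OF j] by simp
      qed simp
    qed
    have "F \<mu> = foldr (\<lambda>j acc. (if \<mu> + g j = 2 ^ k then bW H a k else \<one>\<^bsub>KH\<^esub>) [^]\<^bsub>KH\<^esub> beta j \<otimes>\<^bsub>KH\<^esub> acc) [1..<n+1] \<one>\<^bsub>KH\<^esub>"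
      unfolding Fx
    proof (rule foldr_cong)
      fix j acc assume "j \<in> set [1..<n+1]"
      then have "j \<in> {1..n}" by auto
      then show "cf (\<mu> + g j) [^]\<^bsub>KH\<^esub> beta j \<otimes>\<^bsub>KH\<^esub> acc =
        (if \<mu> + g j = 2 ^ k then bW H a k else \<one>\<^bsub>KH\<^esub>) [^]\<^bsub>KH\<^esub> beta j \<otimes>\<^bsub>KH\<^esub> acc"
        using hk by simp
    qed auto
    also have "\<dots> = bW H a k [^]\<^bsub>KH\<^esub> (\<Sum>j\<in>{1..n}. if \<mu> + g j = 2 ^ k then beta j else 0)"
      unfolding fold_if_pow[OF b_K[OF k1]] list_sum_upt ..
    also have "(\<Sum>j\<in>{1..n}. if \<mu> + g j = 2 ^ k then beta j else 0) = 0"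
    proof (cases "\<exists>i\<in>{1..n}. \<mu> + g i = 2 ^ k")
      case True
      then obtain i where i: "i \<in> {1..n}" "\<mu> + g i = 2 ^ k" by blast
      have "(\<Sum>j\<in>{1..n}. if \<mu> + g j = 2 ^ k then beta j else 0) = (\<Sum>j\<in>{j\<in>{1..n}. g j = g i}. beta j)"
        by (rule blk[where P="\<lambda>x. \<mu> + x = 2 ^ k"]) (use i in auto)
      then show ?thesis using blocks i(1) by simp
    next
      case False
      then show ?thesis by (intro sum.neutral) auto
    qed
    finally show ?thesis by simp
  qed
  show ?thesis
    unfolding iff1 F_def[symmetric] T_def[symmetric] g_def[symmetric] unfolding M_def[symmetric]
  proof (rule iffI)
    assume h: "(\<Sum>i\<le>n. alpha i) = 0 \<and> (\<forall>\<mu>. \<mu> \<noteq> 1 \<longrightarrow> F \<mu> = \<one>\<^bsub>KH\<^esub>) \<and> F 1 \<in> T"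
    have b2: "\<forall>i\<in>{1..n}. (\<Sum>j\<in>{j\<in>{1..n}. g j = g i}. beta j) = 0"
    proof
      fix i assume i: "i \<in> {1..n}"
      have s0: "snd (F (1 - g i)) = 0"
      proof (cases "g i = 0")
        case True
        then show ?thesis using h T_snd unfolding T_def by simp
      next
        case False
        then show ?thesis using h snd_one by simp
      qed
      have "snd (F (1 - g i)) = (\<Sum>j\<in>{j\<in>{1..n}. g j = g i}. beta j)"
        unfolding sndF by (rule blk) auto
      then show "(\<Sum>j\<in>{j\<in>{1..n}. g j = g i}. beta j) = 0" using s0 by simp
    qed
    show "(\<Sum>i\<le>n. alpha i) = 0 \<and> (\<forall>i\<in>{1..n}. (\<Sum>j\<in>{j\<in>{1..n}. g j = g i}. beta j) = 0) \<and>
       (\<forall>\<mu>. \<mu> \<noteq> 1 \<and> \<bar>\<mu>\<bar> \<le> 3 * M \<longrightarrow> F \<mu> = \<one>\<^bsub>KH\<^esub>) \<and> F 1 \<in> T"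
      using h b2 by simp
  next
    assume h: "(\<Sum>i\<le>n. alpha i) = 0 \<and> (\<forall>i\<in>{1..n}. (\<Sum>j\<in>{j\<in>{1..n}. g j = g i}. beta j) = 0) \<and>
       (\<forall>\<mu>. \<mu> \<noteq> 1 \<and> \<bar>\<mu>\<bar> \<le> 3 * M \<longrightarrow> F \<mu> = \<one>\<^bsub>KH\<^esub>) \<and> F 1 \<in> T"
    have "\<forall>\<mu>. \<mu> \<noteq> 1 \<longrightarrow> F \<mu> = \<one>\<^bsub>KH\<^esub>"
    proof (intro allI impI)
      fix \<mu> :: int assume m1: "\<mu> \<noteq> 1"
      show "F \<mu> = \<one>\<^bsub>KH\<^esub>"
      proof (cases "\<bar>\<mu>\<bar> \<le> 3 * M")
        case True then show ?thesis using h m1 by simp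
      next
        case False then show ?thesis using big h m1 by simp
      qed
    qed
    then show "(\<Sum>i\<le>n. alpha i) = 0 \<and> (\<forall>\<mu>. \<mu> \<noteq> 1 \<longrightarrow> F \<mu> = \<one>\<^bsub>KH\<^esub>) \<and> F 1 \<in> T"
      using h by simp
  qed
qed

end



theorem lemma6:
  fixes H :: "('h,'x) monoid_scheme" and a :: "nat \<Rightarrow> 'h"
    and \<phi> :: "'h \<Rightarrow> (int \<Rightarrow> (int \<Rightarrow> 'h) \<times> int) \<times> int"
    and n :: nat and alpha beta :: "nat \<Rightarrow> int"
  assumes "group H"
    and "\<forall>i\<ge>1. a i \<in> carrier H"
    and "generate H {a i | i. i \<ge> 1} = carrier H"
    and "\<phi> \<in> hom H (GG H a)"
    and "\<forall>i\<ge>1. \<phi> (a i) = commW (GG H a) (cW H a)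
                 (conjW (GG H a) (cW H a) (sW H a [^]\<^bsub>GG H a\<^esub> ((2::int) ^ i - 1)))"
    and "n \<ge> 1"
    and "\<forall>i. 0 < i \<and> i < n \<longrightarrow> alpha i \<noteq> 0"
    and "\<forall>j. 1 \<le> j \<and> j \<le> n \<longrightarrow> beta j \<noteq> 0"
  shows "wordW H a n alpha beta \<in> \<phi> ` carrier H \<longleftrightarrow>
    ((\<Sum>i\<le>n. alpha i) = 0
     \<and> (\<forall>i\<in>{1..n}. (\<Sum>j\<in>{j\<in>{1..n}. gammaW alpha j = gammaW alpha i}. beta j) = 0)
     \<and> (\<forall>\<mu>::int. \<mu> \<noteq> 1 \<and> \<bar>\<mu>\<bar> \<le> 3 * Max ((\<lambda>j. \<bar>gammaW alpha j\<bar>) ` {1..n})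
           \<longrightarrow> fst (FW H a n alpha beta) \<mu> = \<one>\<^bsub>KK H a\<^esub>)
     \<and> fst (FW H a n alpha beta) 1
         \<in> generate (KK H a) {commW (KK H a) (zW H) (bW H a i) | i. i \<ge> 1})"
proof -
  interpret wrs H a by (rule wrs.intro[OF assms(1,2)])
  show ?thesis by (rule main[OF assms(4,3,5,6)])
qed


end
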